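(* Let $\mathcal{A}\subset\mathbb{C}$ be a finite transmit alphabet, let $M_t,M_r\ge 1$, $\nu\ge 0$, $T>\nu$ be integers, and let $q\in\{1,\dots,M_t\}$. Let $\mathcal{C}$ be a code whose codewords are complex matrices $\mathbf{X}^{(1)}=[\mathbf{x}[0],\dots,\mathbf{x}[T-\nu-1],\mathbf{0},\dots,\mathbf{0}]\in\mathbb{C}^{M_t\times T}$ with $\mathbf{x}[n]\in\mathcal{A}^{M_t}$ for $0\le n\le T-\nu-1$ and last $\nu$ columns equal to zero. Suppose the diversity order of $\mathcal{C}$ over the $(\nu+1)$-tap ISI channel with $M_r$ receive antennas is $q(\nu+1)M_r$, i.e. $M_r\min_{\mathbf{X}_1^{(1)}\neq\mathbf{X}_2^{(1)}\in\mathcal{C}}\operatorname{rank}_{\mathbb{C}}\big(\Theta(\mathbf{X}_1^{(1)})-\Theta(\mathbf{X}_2^{(1)})\big)=q(\nu+1)M_r$. Then the rate $R=\frac{1}{T}\log_{|\mathcal{A}|}|\mathcal{C}|$ (in symbols per transmission) satisfies $R\le M_t-q+1$.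
   Context: For a matrix $\mathbf{X}^{(1)}=[\mathbf{x}[0],\dots,\mathbf{x}[T-\nu-1],\mathbf{0},\dots,\mathbf{0}]\in\mathbb{C}^{M_t\times T}$ (last $\nu$ columns zero), $\Theta(\mathbf{X}^{(1)})\in\mathbb{C}^{(\nu+1)M_t\times T}$ is the block-Toeplitz matrix with $\nu+1$ block rows, where block row $i$ ($i=0,\dots,\nu$) is $\mathbf{X}^{(1)}$ with its columns shifted right by $i$ positions (i.e. block row $i$ equals $[\mathbf{0},\dots,\mathbf{0},\mathbf{x}[0],\dots,\mathbf{x}[T-\nu-1],\mathbf{0},\dots,\mathbf{0}]$ with $i$ leading zero columns and $\nu-i$ trailing zero columns). This is the equivalent codeword seen through the channel $\mathbf{Y}=[\mathbf{H}_0,\dots,\mathbf{H}_\nu]\Theta(\mathbf{X}^{(1)})+\mathbf{Z}$, and the diversity order of a code is $M_r$ times the minimum rank of differences of these equivalent codewords. *)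

theory Defs
  imports Complex_Main "Jordan_Normal_Form.DL_Rank"
begin

(* Block-Toeplitz matrix Theta(X) with nu+1 block rows of Mt rows each:
   block row i (rows i*Mt .. i*Mt+Mt-1) is X with columns shifted right by i. *)
definition Theta :: "nat \<Rightarrow> nat \<Rightarrow> nat \<Rightarrow> complex mat \<Rightarrow> complex mat" where
  "Theta Mt T \<nu> X = mat ((\<nu>+1)*Mt) T
     (\<lambda>(r,c). let i = r div Mt; k = r mod Mt in
                if i \<le> c then X $$ (k, c - i) else 0)"

definition crank :: "complex mat \<Rightarrow> nat" where
  "crank M = vec_space.rank (dim_row M) M"

definition codeword :: "complex set \<Rightarrow> nat \<Rightarrow> nat \<Rightarrow> nat \<Rightarrow> complex mat \<Rightarrow> bool" where
  "codeword A Mt T \<nu> X \<longleftrightarrow> X \<in> carrier_mat Mt T \<and>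
     (\<forall>k<Mt. \<forall>n<T. (n < T - \<nu> \<longrightarrow> X $$ (k,n) \<in> A) \<and> (T - \<nu> \<le> n \<longrightarrow> X $$ (k,n) = 0))"

definition diversity_order :: "nat \<Rightarrow> nat \<Rightarrow> nat \<Rightarrow> nat \<Rightarrow> complex mat set \<Rightarrow> nat" where
  "diversity_order Mt Mr T \<nu> C = Mr * Min {crank (Theta Mt T \<nu> X1 - Theta Mt T \<nu> X2) | X1 X2. X1 \<in> C \<and> X2 \<in> C \<and> X1 \<noteq> X2}"

end

theory Submission
  imports Defs
begin

lemma rank_rows:
  fixes M :: "complex mat"
  assumes "finite R" "M \<in> carrier_mat n nc"
    and "\<And>i j. i < n \<Longrightarrow> j < nc \<Longrightarrow> i \<notin> R \<Longrightarrow> M $$ (i,j) = 0"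
  shows "vec_space.rank n M \<le> card R"
  using assms
proof (induction R arbitrary: M rule: finite_induct)
  case empty
  then have "M = 0\<^sub>m n nc" by (intro eq_matI) auto
  then show ?case by (simp add: vec_space.rank_0I)
next
  case (insert r R)
  define M1 where "M1 = mat n nc (\<lambda>(i,j). if i = r then 0 else M $$ (i,j))"
  define M2 where "M2 = mat n nc (\<lambda>(i,j). if i = r then M $$ (i,j) else 0)"
  have c1: "M1 \<in> carrier_mat n nc" and c2: "M2 \<in> carrier_mat n nc" unfolding M1_def M2_def by auto
  have eq: "M = M1 + M2" using insert.prems(1) by (intro eq_matI) (auto simp: M1_def M2_def)
  have "vec_space.rank n M1 \<le> card R"
    by (rule insert.IH[OF c1]) (use insert.prems in \<open>auto simp: M1_def\<close>)
  moreover have "vec_space.rank n M2 \<le> 1"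
    by (rule vec_space.rank_le_1_product_entries[OF c2, where f = "\<lambda>i. if i = r then 1 else 0"
          and g = "\<lambda>j. M $$ (r,j)"]) (auto simp: M2_def)
  moreover have "vec_space.rank n M \<le> vec_space.rank n M1 + vec_space.rank n M2"
    unfolding eq by (rule vec_space.rank_subadditive[OF c1 c2])
  ultimately show ?case using insert.hyps by simp
qed

theorem lemma1:
  fixes A :: "complex set" and C :: "complex mat set"
    and Mt Mr \<nu> T q :: nat
  assumes "finite A"
    and "Mt \<ge> 1" and "Mr \<ge> 1" and "T > \<nu>"
    and "1 \<le> q" and "q \<le> Mt"
    and "\<forall>X\<in>C. codeword A Mt T \<nu> X"
    and "diversity_order Mt Mr T \<nu> C = q * (\<nu>+1) * Mr"
  shows "log (real (card A)) (real (card C)) / real T \<le> real Mt - real q + 1"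
proof (cases "card C \<le> 1 \<or> card A \<le> 1")
  case True
  then have "log (real (card A)) (real (card C)) = 0"
  proof
    assume "card C \<le> 1"
    then have "card C = 0 \<or> card C = 1" by auto
    then show ?thesis by (auto simp: log_def)
  next
    assume "card A \<le> 1"
    then have "card A = 0 \<or> card A = 1" by auto
    then show ?thesis by (auto simp: log_def)
  qed
  then show ?thesis using assms by simp
next
  case False
  then have cC: "card C \<ge> 2" and cA: "card A \<ge> 2" by auto
  then have finC: "finite C" using card.infinite by fastforce
  define S where "S = {crank (Theta Mt T \<nu> X1 - Theta Mt T \<nu> X2) | X1 X2. X1 \<in> C \<and> X2 \<in> C \<and> X1 \<noteq> X2}"
  have "S = (\<lambda>(X1,X2). crank (Theta Mt T \<nu> X1 - Theta Mt T \<nu> X2)) ` {p \<in> C \<times> C. fst p \<noteq> snd p}"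
    unfolding S_def by force
  then have finS: "finite S" using finC by simp
  have "Mr * Min S = q * (\<nu>+1) * Mr" using assms(8) unfolding diversity_order_def S_def by simp
  then have MinS: "Min S = q * (\<nu>+1)" using assms(3) by simp
  have rk: "crank (Theta Mt T \<nu> X1 - Theta Mt T \<nu> X2) \<ge> q * (\<nu>+1)"
    if "X1 \<in> C" "X2 \<in> C" "X1 \<noteq> X2" for X1 X2
  proof -
    have "crank (Theta Mt T \<nu> X1 - Theta Mt T \<nu> X2) \<in> S" unfolding S_def using that by blast
    then show ?thesis using Min_le[OF finS] MinS by metis
  qed
  define I where "I = {0..<Mt-q+1} \<times> {0..<T-\<nu>}"
  define proj where "proj X = (\<lambda>p. if p \<in> I then X $$ p else undefined)" for X :: "complex mat"
  have projin: "proj X \<in> PiE I (\<lambda>_. A)" if "X \<in> C" for X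
  proof -
    have cw: "codeword A Mt T \<nu> X" using assms(7) that by auto
    show ?thesis unfolding proj_def I_def PiE_def extensional_def
    proof (clarsimp)
      fix a b assume "a < Suc (Mt - q)" "b < T - \<nu>"
      then have "a < Mt" "b < T" using assms(5,6) by auto
      then show "X $$ (a, b) \<in> A" using cw \<open>b < T - \<nu>\<close> unfolding codeword_def by auto
    qed
  qed
  have inj: "inj_on proj C"
  proof (rule inj_onI, rule ccontr)
    fix X1 X2 assume X: "X1 \<in> C" "X2 \<in> C" "proj X1 = proj X2" "X1 \<noteq> X2"
    have cw1: "codeword A Mt T \<nu> X1" and cw2: "codeword A Mt T \<nu> X2" using X assms(7) by auto
    have agree: "X1 $$ (k,n) = X2 $$ (k,n)" if "k < Mt-q+1" "n < T" for k n
    proof (cases "n < T - \<nu>")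
      case True
      then have "(k,n) \<in> I" using that unfolding I_def by auto
      then show ?thesis using fun_cong[OF X(3), of "(k,n)"] unfolding proj_def by simp
    next
      case False
      have "k < Mt" using that(1) assms(5,6) by auto
      then show ?thesis using cw1 cw2 that False unfolding codeword_def by auto
    qed
    define R where "R = (\<lambda>(i,k). i*Mt+k) ` ({..\<nu>} \<times> {Mt-q+1..<Mt})"
    have finR: "finite R" unfolding R_def by simp
    have "card R \<le> card ({..\<nu>} \<times> {Mt-q+1..<Mt})" unfolding R_def by (rule card_image_le) simp
    also have "\<dots> = (\<nu>+1) * (q-1)" using assms(5,6) by (simp add: card_cartesian_product)
    finally have cR: "card R \<le> (\<nu>+1) * (q-1)" .
    let ?M = "Theta Mt T \<nu> X1 - Theta Mt T \<nu> X2"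
    have carr: "?M \<in> carrier_mat ((\<nu>+1)*Mt) T" unfolding Theta_def by auto
    have zero: "?M $$ (i,j) = 0" if "i < (\<nu>+1)*Mt" "j < T" "i \<notin> R" for i j
    proof -
      have idiv: "i div Mt \<le> \<nu>" using that(1) assms(2)
        by (metis Suc_eq_plus1 less_Suc_eq_le less_mult_imp_div_less)
      have imod: "i mod Mt < Mt" using assms(2) by simp
      have "i = (\<lambda>(i,k). i*Mt+k) (i div Mt, i mod Mt)" by simp
      then have "i mod Mt < Mt - q + 1"
        using that(3) idiv imod unfolding R_def
        by (metis (no_types, lifting) SigmaI atLeastLessThan_iff atMost_iff image_eqI not_le
            Suc_eq_plus1 less_Suc_eq_le)
      then show ?thesis using that agree[of "i mod Mt" "j - i div Mt"]
        unfolding Theta_def by (auto simp: Let_def)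
    qed
    have "crank ?M \<le> card R"
      unfolding crank_def using carr
      by (subst carrier_matD(1)[OF carr]) (rule rank_rows[OF finR carr zero])
    then have "crank ?M \<le> (\<nu>+1)*(q-1)" using cR by simp
    moreover have "crank ?M \<ge> q*(\<nu>+1)" using rk X by simp
    ultimately show False using assms(5)
      by (metis (no_types, lifting) diff_less le_trans less_numeral_extra(1) mult.commute
          mult_less_cancel2 not_le zero_less_Suc Suc_eq_plus1 order.strict_trans1)
  qed
  have "card C \<le> card (PiE I (\<lambda>_. A))"
    by (rule card_inj_on_le[OF inj]) (use projin in \<open>auto simp: I_def intro: finite_PiE assms(1)\<close>)
  also have "\<dots> = card A ^ ((Mt-q+1)*(T-\<nu>))" by (simp add: card_PiE I_def card_cartesian_product)
  finally have cCle: "card C \<le> card A ^ ((Mt-q+1)*(T-\<nu>))" .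
  have "log (real (card A)) (real (card C)) \<le> log (real (card A)) (real (card A ^ ((Mt-q+1)*(T-\<nu>))))"
    using cCle cA cC by (subst log_le_cancel_iff) (auto simp del: of_nat_power)
  also have "\<dots> = real ((Mt-q+1)*(T-\<nu>))" using cA by (simp add: log_nat_power)
  also have "\<dots> \<le> real ((Mt-q+1)*T)" by (simp only: of_nat_le_iff) (rule mult_le_mono2, simp)
  finally have "log (real (card A)) (real (card C)) \<le> real ((Mt-q+1)*T)" .
  then have "log (real (card A)) (real (card C)) / real T \<le> real (Mt-q+1)"
  proof -
    have "real T > 0" using assms(4) by simp
    moreover have "log (real (card A)) (real (card C)) \<le> real (Mt-q+1) * real T"
      using \<open>log (real (card A)) (real (card C)) \<le> real ((Mt-q+1)*T)\<close> by (simp only: of_nat_mult)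
    ultimately show ?thesis by (simp add: pos_divide_le_eq del: of_nat_add of_nat_Suc)
  qed
  then show ?thesis using assms(6) by (simp add: of_nat_diff)
qed

end
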